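(* Let $p/q$ (in lowest terms, $q>0$) be a convergent of the simple continued fraction expansion of $e$. If $q=(n!)^k$ for some integer $n\ge 0$ and some integer $k>0$, then $n/k<e$.
   Context: The convergents of $e$ are the rationals obtained by truncating the simple continued fraction expansion of $e$; they begin $2/1,3/1,8/3,11/4,19/7,87/32,\dots$. *)

theory Defs
  imports Complex_Main
begin

fun cf_rem :: "real \<Rightarrow> nat \<Rightarrow> real" where
  "cf_rem x 0 = x"
| "cf_rem x (Suc i) = 1 / frac (cf_rem x i)"

definition cf_coeff :: "real \<Rightarrow> nat \<Rightarrow> int" where
  "cf_coeff x i = \<lfloor>cf_rem x i\<rfloor>"

fun cf_eval :: "int list \<Rightarrow> rat" where
  "cf_eval [] = 0"
| "cf_eval [a] = of_int a"
| "cf_eval (a # b # rest) = of_int a + 1 / cf_eval (b # rest)"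

definition cf_convergent :: "real \<Rightarrow> nat \<Rightarrow> rat" where
  "cf_convergent x m = cf_eval (map (cf_coeff x) [0..<Suc m])"

end

theory Submission
  imports Defs
begin


lemma ineqA:
  fixes u :: real assumes "0 \<le> u" "u \<le> 1/2"
  shows "(1+u) * ln (1+u) - (1-u) * ln (1-u) \<le> 2*u"
proof -
  define h where "h = (\<lambda>u::real. 2*u - (1+u) * ln (1+u) + (1-u) * ln (1-u))"
  have "h 0 \<le> h u"
  proof (rule DERIV_nonneg_imp_nondecreasing[OF assms(1)])
    fix x :: real assume x: "0 \<le> x" "x \<le> u"
    have p1: "1+x > 0" "1-x > 0" using x assms by auto
    have d: "DERIV h x :> (2 - (ln (1+x) + 1) + (- ln (1-x) - 1))"
      unfolding h_def
      by (rule derivative_eq_intros refl | use p1 in simp)+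
    have "ln (1+x) + ln (1-x) = ln ((1+x)*(1-x))" using x assms by (simp add: ln_mult)
    also have "\<dots> \<le> (1+x)*(1-x) - 1" using p1 by (intro ln_le_minus_one) simp
    also have "\<dots> \<le> 0" by (simp add: algebra_simps)
    finally show "\<exists>y. DERIV h x :> y \<and> y \<ge> 0" using d by (intro exI[of _ "2 - (ln (1+x) + 1) + (- ln (1-x) - 1)"]) auto
  qed
  thus ?thesis by (simp add: h_def)
qed

lemma ineqB:
  fixes x :: real assumes "0 \<le> x"
  shows "2*x/(2+x) \<le> ln (1+x)"
proof -
  define h where "h = (\<lambda>x::real. ln (1+x) - 2*x/(2+x))"
  have "h 0 \<le> h x"
  proof (rule DERIV_nonneg_imp_nondecreasing[OF assms(1)])
    fix y :: real assume y: "0 \<le> y" "y \<le> x"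
    have d: "DERIV h y :> (1/(1+y) - (2*(2+y) - 2*y)/(2+y)^2)"
      unfolding h_def using y
      by (auto intro!: derivative_eq_intros simp: field_simps power2_eq_square)
    have p: "(2+y)^2 > 0" "1+y > 0" using y by auto
    have yy: "y*y \<ge> 0" by simp
    have "4*(1+y) \<le> (2+y)^2" using yy by (simp add: power2_eq_square algebra_simps)
    hence "4/(2+y)^2 \<le> 1/(1+y)" using p by (simp add: divide_simps)
    moreover have "2*(2+y) - 2*y = (4::real)" by simp
    ultimately have "(2*(2+y) - 2*y)/(2+y)^2 \<le> 1/(1+y)" by simp
    thus "\<exists>z. DERIV h y :> z \<and> z \<ge> 0" using d by auto
  qed
  thus ?thesis by (simp add: h_def)
qed

lemma step_aux:
  fixes x X r c Y l f r' :: real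
  shows "x \<ge> X - r + c \<Longrightarrow> Y - X \<le> l + 1 \<Longrightarrow> f = l + x \<Longrightarrow> r' = r + 1 \<Longrightarrow> f \<ge> Y - r' + c"
  by linarith

lemma ln_fact_lower:
  "ln (fact n :: real) \<ge> (real n + 1/2) * ln (real n + 1/2) - real n + ln 2 / 2"
proof (induction n)
  case 0
  have "ln (1/2::real) = - ln 2" by (simp add: ln_div)
  then show ?case by simp
next
  case (Suc n)
  define j where "j = real n + 1"
  define u where "u = 1 / (2*j)"
  have j1: "j \<ge> 1" by (simp add: j_def)
  have u: "0 \<le> u" "u \<le> 1/2" using j1 by (auto simp: u_def field_simps)
  have A: "(1+u) * ln (1+u) - (1-u) * ln (1-u) \<le> 2*u" by (rule ineqA[OF u])
  have e1: "j + 1/2 = j * (1+u)" "j - 1/2 = j * (1-u)" using j1 by (auto simp: u_def field_simps)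
  have l1: "ln (j + 1/2) = ln j + ln (1+u)" using j1 u by (simp add: e1 ln_mult)
  have l2: "ln (j - 1/2) = ln j + ln (1-u)" using j1 u by (simp add: e1 ln_mult)
  have "j * ((1+u) * ln (1+u) - (1-u) * ln (1-u)) \<le> j * (2*u)"
    using A j1 by (intro mult_left_mono) auto
  moreover have "j * (2*u) = 1" using j1 by (simp add: u_def)
  moreover have "j * ((1+u) * ln (1+u) - (1-u) * ln (1-u)) = (j*(1+u)) * ln (1+u) - (j*(1-u)) * ln (1-u)"
    by (simp add: algebra_simps)
  ultimately have B: "(j + 1/2) * ln (1+u) - (j - 1/2) * ln (1-u) \<le> 1"
    using e1 by simp
  have "(j + 1/2) * ln (j + 1/2) - (j - 1/2) * ln (j - 1/2)
      = ln j + ((j + 1/2) * ln (1+u) - (j - 1/2) * ln (1-u))"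
    unfolding l1 l2 by (simp add: algebra_simps)
  hence key: "(j + 1/2) * ln (j + 1/2) - (j - 1/2) * ln (j - 1/2) \<le> ln j + 1"
    using B by linarith
  have fS: "ln (fact (Suc n) :: real) = ln j + ln (fact n)"
    by (simp add: j_def ln_mult add.commute)
  have jm: "j - 1/2 = real n + 1/2" and jp: "j + 1/2 = real (Suc n) + 1/2" by (auto simp: j_def)
  have key': "(real (Suc n) + 1/2) * ln (real (Suc n) + 1/2) - (real n + 1/2) * ln (real n + 1/2) \<le> ln j + 1"
    using key unfolding jm jp .
  show ?case by (rule step_aux[OF Suc.IH key' fS]) simp
qed

lemma ln_fact_upper:
  assumes "N \<ge> 1"
  shows "ln (fact N :: real) \<le> (real N + 1/2) * ln (real N) - real N + 1"
  using assms
proof (induction N rule: dec_induct)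
  case base
  then show ?case by simp
next
  case (step N)
  have N1: "real N \<ge> 1" using step by simp
  have "2*(1/real N)/(2+1/real N) \<le> ln (1 + 1/real N)" by (rule ineqB) simp
  also have "1 + 1/real N = (real N + 1)/real N" using N1 by (simp add: field_simps)
  also have "ln \<dots> = ln (real N + 1) - ln (real N)" using N1 by (simp add: ln_div)
  finally have B: "2/(2*real N+1) \<le> ln (real N + 1) - ln (real N)"
    using N1 by (simp add: field_simps)
  hence "(real N + 1/2) * (2/(2*real N+1)) \<le> (real N + 1/2) * (ln (real N + 1) - ln (real N))"
    using N1 by (intro mult_left_mono) auto
  hence C: "1 \<le> (real N + 1/2) * (ln (real N + 1) - ln (real N))"
    using N1 by (simp add: field_simps)
  have "ln (fact (Suc N) :: real) = ln (real N + 1) + ln (fact N)"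
    by (simp add: ln_mult add.commute)
  then show ?case using step.IH C by (simp add: algebra_simps)
qed

lemma poly_ineq:
  fixes n k :: nat
  assumes "k \<ge> 2" "n \<ge> 6" "n \<ge> 2*k"
  shows "9 * (n*k+1)^2 * (n*k) \<le> (2*n)^(2*k)"
proof (cases "k = 2")
  case True
  have nn: "6*n \<le> n*n" using assms by simp
  have sq: "(n*2+1)^2 = 4*(n*n)+4*n+1" by (simp add: power2_eq_square algebra_simps)
  have a: "(n*2+1)^2 \<le> 5*(n*n)" unfolding sq using nn assms by linarith
  have "9 * (n*2+1)^2 * (n*2) \<le> 9 * (5*(n*n)) * (n*2)"
    using a by (intro mult_right_mono mult_left_mono) auto
  also have "\<dots> = 90 * (n*n*n)" by simp
  also have "\<dots> \<le> 16 * n * (n*n*n)" using assms by (intro mult_right_mono) auto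
  also have "\<dots> = (2*n)^(2*2)" by (simp add: power_def algebra_simps)
  finally show ?thesis using True by simp
next
  case False
  hence k3: "k \<ge> 3" using assms by simp
  have nk: "n*k \<le> n*n" using assms by simp
  have "2*(n*k) \<le> n*n" using assms by (metis mult.left_commute mult_le_mono2)
  moreover have "n*k \<ge> 1" using assms by simp
  ultimately have nk1: "n*k+1 \<le> n*n" by linarith
  have "9 * (n*k+1)^2 * (n*k) \<le> 9 * (n*n)^2 * (n*n)"
    using nk nk1 by (intro mult_mono mult_left_mono power_mono) auto
  also have "\<dots> \<le> 64 * (n*n)^2 * (n*n)" by simp
  also have "\<dots> = (2*n)^6" by (simp add: power_def algebra_simps)
  also have "\<dots> \<le> (2*n)^(2*k)" using k3 assms by (intro power_increasing) auto
  finally show ?thesis .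
qed

lemma twice_le: "(x::real) \<le> y \<Longrightarrow> 2*y = z \<Longrightarrow> 2*x \<le> z" by simp

lemma fact_ineq_k2:
  fixes n k :: nat
  assumes k: "k \<ge> 2" and n: "real n \<ge> exp 1 * real k" and e25: "exp 1 > (5/2::real)"
  shows "(fact (n*k+1) :: real) \<le> (fact n)^(2*k)"
proof -
  have e2: "exp 1 \<ge> (2::real)" using e25 by simp
  have "exp 1 * real k \<ge> 2 * real k" using e2 by (intro mult_right_mono) auto
  hence "real n \<ge> 2 * real k" using n by linarith
  hence n2k: "n \<ge> 2*k" by linarith
  have "exp 1 * real k > 5/2 * real k" using e25 k by (intro mult_strict_right_mono) auto
  hence "real n > 5/2 * real k" using n by linarith
  hence "real n > 5" using k by linarith
  hence n6: "n \<ge> 6" by linarith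
  define N where "N = n*k"
  define R where "R = real n"
  define K where "K = real k"
  define a where "a = ln R"
  define b where "b = ln K"
  have R1: "R \<ge> 6" "K \<ge> 2" using n6 k by (auto simp: R_def K_def)
  have NRK: "real N = R*K" by (simp add: N_def R_def K_def)
  have lnN: "ln (real N) = a + b" using R1 by (simp add: NRK a_def b_def ln_mult)
  have P: "9 * (N+1)^2 * N \<le> (2*n)^(2*k)" unfolding N_def by (rule poly_ineq[OF k n6 n2k])
  hence "real (9 * (N+1)^2 * N) \<le> real ((2*n)^(2*k))" by (simp only: of_nat_le_iff)
  moreover have "0 < 9 * (N+1)^2 * N" using n6 k by (simp add: N_def)
  ultimately have "ln (real (9 * (N+1)^2 * N)) \<le> ln (real ((2*n)^(2*k)))"
    by (intro ln_mono) (simp_all only: of_nat_0_less_iff)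
  moreover have "ln (real (9 * (N+1)^2 * N)) = ln 9 + 2 * ln (real N + 1) + ln (real N)"
  proof -
    have Np: "real N > 0" using n6 k by (simp add: N_def)
    have "real (9 * (N+1)^2 * N) = 9 * (real N + 1)^2 * real N" by simp
    also have "ln \<dots> = ln (9 * (real N + 1)^2) + ln (real N)" using Np by (intro ln_mult_pos) auto
    also have "ln (9 * (real N + 1)^2) = ln 9 + ln ((real N + 1)^2)" using Np by (intro ln_mult_pos) auto
    also have "ln ((real N + 1)^2) = 2 * ln (real N + 1)" using Np by (simp add: ln_realpow)
    finally show ?thesis by simp
  qed
  moreover have "ln (real ((2*n)^(2*k))) = 2*K * (ln 2 + a)"
  proof -
    have "real ((2*n)^(2*k)) = (2 * R)^(2*k)" by (simp add: R_def)
    also have "ln \<dots> = real (2*k) * ln (2*R)" by (rule ln_realpow)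
    also have "ln (2*R) = ln 2 + a" using R1 by (simp add: a_def ln_mult)
    finally show ?thesis by (simp add: K_def)
  qed
  ultimately have P2: "ln 9 + 2 * ln (real N + 1) + ln (real N) \<le> 2*K * (ln 2 + a)" by simp
  have "exp 2 = exp 1 * exp (1::real)" by (simp flip: exp_add)
  also have "\<dots> \<le> 3 * 3" using exp_le by (intro mult_mono) auto
  finally have "ln (exp 2) \<le> ln (9::real)" by (intro ln_mono) auto
  hence ln9: "ln 9 \<ge> (2::real)" by simp
  have "ln (exp 1 * K) \<le> a" unfolding a_def using n R1 by (intro ln_mono) (auto simp: R_def K_def)
  hence ab: "a \<ge> 1 + b" using R1 by (simp add: ln_mult b_def)
  have h1: "R*K*a - R*K - R*K*b \<ge> 0"
  proof -
    have "R*K*(a - 1 - b) \<ge> 0" using ab R1 by simp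
    thus ?thesis by (simp add: algebra_simps)
  qed
  have L: "ln (fact n :: real) \<ge> (R + 1/2) * a - R + ln 2 / 2"
  proof -
    have "(R + 1/2) * a \<le> (R + 1/2) * ln (R + 1/2)" unfolding a_def using R1
      by (intro mult_left_mono ln_mono) auto
    thus ?thesis using ln_fact_lower[of n] unfolding R_def by linarith
  qed
  hence L2: "2*K * ln (fact n :: real) \<ge> 2*K*((R + 1/2) * a - R + ln 2 / 2)"
    using R1 by (intro mult_left_mono) auto
  have U: "ln (fact N :: real) \<le> (R*K + 1/2) * (a+b) - R*K + 1"
  proof -
    have U0: "ln (fact N :: real) \<le> (real N + 1/2) * ln (real N) - real N + 1"
      using n6 k by (intro ln_fact_upper) (simp add: N_def)
    show ?thesis by (rule U0[unfolded lnN, unfolded NRK])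
  qed
  have fS: "ln (fact (N+1) :: real) = ln (real N + 1) + ln (fact N)"
    by (simp add: ln_mult add.commute)
  have g1: "2*K*ln (fact n) \<ge> K*a + K*ln 2 + 2*(K*R*a) - 2*(K*R)"
    using L2 by (simp add: algebra_simps)
  have g2: "2*ln (fact N :: real) \<le> 2 + 2*(K*R*a) + 2*(K*R*b) + a + b - 2*(K*R)"
    by (rule twice_le[OF U]) (simp add: algebra_simps)
  have g3: "2*ln (real N + 1) \<le> 2*(K*a) + 2*(K*ln 2) - a - b - 2"
  proof -
    have "2*K*(ln 2 + a) = 2*(K*a) + 2*(K*ln 2)" by (simp add: algebra_simps)
    thus ?thesis using P2 ln9 lnN by linarith
  qed
  have g4: "K*R + K*R*b \<le> K*R*a" using h1 by (simp add: algebra_simps)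
  have "ln (fact (N+1) :: real) \<le> 2*K * ln (fact n)"
    using fS g1 g2 g3 g4 by linarith
  hence "ln (fact (N+1) :: real) \<le> ln ((fact n)^(2*k))"
    by (simp add: ln_realpow K_def)
  hence "(fact (N+1) :: real) \<le> (fact n)^(2*k)"
    by (subst (asm) ln_le_cancel_iff) auto
  thus ?thesis by (simp add: N_def)
qed


lemma cf_rem_shift: "cf_rem x (Suc i) = cf_rem (1 / frac x) i"
  by (induction i) auto

lemma cf_coeff_shift: "cf_coeff x (Suc i) = cf_coeff (1 / frac x) i"
  unfolding cf_coeff_def cf_rem_shift ..

fun cfF :: "int list \<Rightarrow> real \<Rightarrow> real" where
  "cfF [] t = t"
| "cfF (a # as) t = of_int a + 1 / cfF as t"

fun mob :: "int list \<Rightarrow> int \<times> int \<times> int \<times> int" where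
  "mob [] = (1, 0, 0, 1)"
| "mob (a # as) = (case mob as of (A, B, C, D) \<Rightarrow> (a*A + C, a*B + D, A, B))"

lemma cf_eval_Cons: "zs \<noteq> [] \<Longrightarrow> cf_eval (z # zs) = of_int z + 1 / cf_eval zs"
  by (cases zs) auto

lemma cf_eval_snoc: "real_of_rat (cf_eval (xs @ [a])) = cfF xs (of_int a)"
proof (induction xs)
  case Nil then show ?case by simp
next
  case (Cons y ys)
  have "cf_eval ((y # ys) @ [a]) = of_int y + 1 / cf_eval (ys @ [a])"
    by (simp add: cf_eval_Cons)
  then show ?case using Cons by (simp add: of_rat_add of_rat_divide)
qed

lemma cf_rem_repr: "x = cfF (map (cf_coeff x) [0..<m]) (cf_rem x m)"
proof (induction m arbitrary: x)
  case 0 then show ?case by simp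
next
  case (Suc m)
  define x' where "x' = 1 / frac x"
  have "map (cf_coeff x) [0..<Suc m] = cf_coeff x 0 # map (cf_coeff x') [0..<m]"
  proof -
    have "[0..<Suc m] = 0 # map Suc [0..<m]" by (simp add: upt_conv_Cons map_Suc_upt)
    thus ?thesis by (simp add: cf_coeff_shift x'_def)
  qed
  moreover have "cf_rem x (Suc m) = cf_rem x' m" unfolding cf_rem_shift x'_def ..
  ultimately have "cfF (map (cf_coeff x) [0..<Suc m]) (cf_rem x (Suc m)) = of_int (cf_coeff x 0) + 1 / x'"
    using Suc.IH[of x'] by simp
  also have "\<dots> = x" by (simp add: x'_def cf_coeff_def frac_def)
  finally show ?case by simp
qed

lemma mob_inv:
  assumes "\<forall>a\<in>set as. a \<ge> 1" "mob as = (A, B, C, D)"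
  shows "A \<ge> 1 \<and> B \<ge> 0 \<and> C \<ge> 0 \<and> D \<ge> 0 \<and> C + D \<ge> 1 \<and> \<bar>A*D - B*C\<bar> = 1"
  using assms
proof (induction as arbitrary: A B C D)
  case Nil then show ?case by auto
next
  case (Cons a as)
  obtain A' B' C' D' where m: "mob as = (A', B', C', D')" by (metis prod_cases4)
  have IH: "A' \<ge> 1 \<and> B' \<ge> 0 \<and> C' \<ge> 0 \<and> D' \<ge> 0 \<and> C' + D' \<ge> 1 \<and> \<bar>A'*D' - B'*C'\<bar> = 1"
    using Cons m by auto
  have a1: "a \<ge> 1" using Cons by auto
  have eq: "A = a*A' + C'" "B = a*B' + D'" "C = A'" "D = B'" using Cons(3) m by auto
  have "A*D - B*C = - (A'*D' - B'*C')" by (simp add: eq algebra_simps)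
  moreover have "a*A' \<ge> 1" using a1 IH by (metis mult_mono' mult_1 zero_le_one)
  moreover have "a*B' \<ge> 0" using a1 IH by simp
  ultimately show ?case using IH by (auto simp: eq)
qed

lemma cfF_mob:
  assumes "\<forall>a\<in>set as. a \<ge> 1" "mob as = (A, B, C, D)" "t \<ge> 1"
  shows "cfF as t = (A*t + B) / (C*t + D)"
  using assms
proof (induction as arbitrary: A B C D)
  case Nil then show ?case by auto
next
  case (Cons a as)
  obtain A' B' C' D' where m: "mob as = (A', B', C', D')" by (metis prod_cases4)
  have IH: "cfF as t = (A'*t + B') / (C'*t + D')" using Cons m by auto
  have inv: "A' \<ge> 1" "B' \<ge> 0" using mob_inv[of as A' B' C' D'] Cons m by auto
  have pos: "A'*t + B' > 0"
  proof -
    have "real_of_int A' * t \<ge> 1" using inv Cons(4) by (metis mult_mono' mult_1 of_int_1_le_iff zero_le_one)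
    thus ?thesis using inv by linarith
  qed
  have eq: "A = a*A' + C'" "B = a*B' + D'" "C = A'" "D = B'" using Cons(3) m by auto
  show ?case using pos by (simp add: IH eq field_simps)
qed

lemma irr_step: assumes y: "(y::real) \<notin> \<rat>" shows "1 / frac y \<notin> \<rat>"
proof (rule notI)
  assume h: "1 / frac y \<in> \<rat>"
  have "1 / (1 / frac y) \<in> \<rat>" using Rats_divide[OF Rats_1 h] .
  thus False using y by simp
qed

lemma rem_irr: "x \<notin> \<rat> \<Longrightarrow> cf_rem x i \<notin> \<rat>"
  by (induction i) (simp_all add: irr_step)

lemma rem_ge1:
  assumes "(x::real) \<ge> 1" "x \<notin> \<rat>"
  shows "cf_rem x i \<ge> 1"
proof (cases i)
  case 0 then show ?thesis using assms by simp
next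
  case (Suc j)
  have "cf_rem x j \<notin> \<rat>" using rem_irr assms by auto
  hence "cf_rem x j \<notin> \<int>" using Ints_subset_Rats by blast
  hence f: "frac (cf_rem x j) > 0" "frac (cf_rem x j) < 1"
    using frac_eq_0_iff[of "cf_rem x j"] frac_ge_0[of "cf_rem x j"] frac_lt_1[of "cf_rem x j"] by auto
  have "cf_rem x i = 1 / frac (cf_rem x j)" using Suc by simp
  also have "\<dots> \<ge> 1" using f by (simp add: field_simps)
  finally show ?thesis .
qed

lemma coeff_ge1:
  assumes "(x::real) \<ge> 1" "x \<notin> \<rat>"
  shows "cf_coeff x i \<ge> 1"
  using rem_ge1[OF assms, of i] by (simp add: cf_coeff_def)

lemma cf_approx:
  assumes x1: "(x::real) \<ge> 1" and irr: "x \<notin> \<rat>"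
    and pq: "quotient_of (cf_convergent x m) = (p, q)"
  shows "\<bar>x - of_int p / of_int q\<bar> \<le> 1 / (of_int q)^2"
proof -
  define as where "as = map (cf_coeff x) [0..<m]"
  define a where "a = cf_coeff x m"
  define r where "r = cf_rem x m"
  have as1: "\<forall>z\<in>set as. z \<ge> 1" using coeff_ge1[OF x1 irr] by (auto simp: as_def)
  have a1: "real_of_int a \<ge> 1" using coeff_ge1[OF x1 irr] by (simp add: a_def)
  have r1: "r \<ge> 1" using rem_ge1[OF x1 irr] by (simp add: r_def)
  have ar: "real_of_int a \<le> r" "r < real_of_int a + 1"
    by (simp_all add: a_def r_def cf_coeff_def)
  obtain A B C D where m: "mob as = (A, B, C, D)" by (metis prod_cases4)
  have inv: "A \<ge> 1 \<and> B \<ge> 0 \<and> C \<ge> 0 \<and> D \<ge> 0 \<and> C + D \<ge> 1 \<and> \<bar>A*D - B*C\<bar> = 1"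
    using mob_inv[OF as1 m] .
  have conv: "real_of_rat (cf_convergent x m) = cfF as (of_int a)"
    unfolding cf_convergent_def as_def a_def by (simp add: cf_eval_snoc)
  also have "\<dots> = (A*a + B) / (C*a + D)" using cfF_mob[OF as1 m] a1 by simp
  finally have c: "real_of_rat (cf_convergent x m) = (A*a + B) / (C*a + D)" .
  have xr: "x = (A*r + B) / (C*r + D)"
    using cf_rem_repr[of x m] cfF_mob[OF as1 m r1] by (simp add: as_def r_def)
  define den where "den = C*a + D"
  have den1: "den \<ge> 1"
  proof -
    have "C*a \<ge> C" using inv a1 by (simp add: mult_le_cancel_left1)
    thus ?thesis using inv by (simp add: den_def)
  qed
  have denr: "real_of_int C * r + D \<ge> real_of_int den"
    using inv ar by (simp add: den_def mult_left_mono)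
  have dpos: "real_of_int C * r + D > 0" "real_of_int den > 0" using denr den1 by linarith+
  have "x - (A*a + B) / (C*a + D) = (A*D - B*C) * (r - a) / ((C*r + D) * den)"
    using dpos unfolding xr by (simp add: den_def field_simps)
  moreover have "\<bar>real_of_int A * D - B * C\<bar> = 1"
  proof -
    have "real_of_int \<bar>A*D - B*C\<bar> = 1" using inv by simp
    thus ?thesis by simp
  qed
  ultimately have "\<bar>x - (A*a + B) / (C*a + D)\<bar> = (r - a) / ((C*r + D) * den)"
    using inv ar dpos by (simp add: abs_mult abs_divide)
  also have "\<dots> \<le> 1 / (den * den)"
  proof -
    have "(r - a) * (den * den) \<le> 1 * ((C*r + D) * den)"
      using ar denr dpos by (intro mult_mono) auto
    thus ?thesis using dpos by (simp add: divide_simps)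
  qed
  finally have bound: "\<bar>x - real_of_rat (cf_convergent x m)\<bar> \<le> 1 / (den * den)"
    using c by (simp add: den_def)
  have qpos: "q > 0" using quotient_of_denom_pos[OF pq] .
  have cop: "coprime p q" using quotient_of_coprime[OF pq] .
  have "cf_convergent x m = of_int p / of_int q" using quotient_of_div[OF pq] .
  hence cpq: "real_of_rat (cf_convergent x m) = of_int p / of_int q" by (simp add: of_rat_divide)
  have "real_of_int p / of_int q = (A*a + B) / den" using c cpq by (simp add: den_def)
  hence "real_of_int (p * den) = real_of_int ((A*a + B) * q)"
    using qpos dpos by (simp add: field_simps)
  hence eqi: "p * den = (A*a + B) * q" by (simp only: of_int_eq_iff)
  have "q dvd p * den" unfolding eqi by simp
  hence "q dvd den" using cop by (metis coprime_commute coprime_dvd_mult_left_iff coprime_dvd_mult_right_iff)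
  hence qd: "q \<le> den" using den1 by (simp add: zdvd_imp_le)
  have "1 / (real_of_int den * den) \<le> 1 / (of_int q)^2"
    using qd qpos by (intro divide_left_mono) (auto simp: power2_eq_square intro: mult_mono)
  thus ?thesis using bound cpq by simp
qed




lemma e_sums: "(\<lambda>j. 1 / fact j) sums (exp 1 :: real)"
  using exp_converges[of "1::real"] by (simp add: divide_inverse scaleR_conv_of_real)

definition eS :: "nat \<Rightarrow> real" where "eS N = (\<Sum>j<Suc N. 1 / fact j)"

lemma e_tail: "exp 1 - eS N = (\<Sum>j. 1 / fact (j + Suc N))"
proof -
  have s: "summable (\<lambda>j. 1 / fact j :: real)" using e_sums by (rule sums_summable)
  have "exp 1 = (\<Sum>j. 1 / fact (j + Suc N)) + (\<Sum>j<Suc N. 1 / fact j :: real)"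
    using suminf_split_initial_segment[OF s, of "Suc N"] e_sums by (simp add: sums_iff)
  thus ?thesis by (simp add: eS_def)
qed

lemma tail_summable: "summable (\<lambda>j. 1 / fact (j + Suc N) :: real)"
  using e_sums summable_iff_shift[of "\<lambda>j. 1 / fact j :: real" "Suc N"] by (simp add: sums_iff)

lemma e_tail_lower: "exp 1 - eS N > 1 / fact (Suc N)"
proof -
  define f where "f = (\<lambda>j. 1 / fact (j + Suc N) :: real)"
  have "(\<Sum>j\<in>{0,1}. f j) \<le> suminf f"
    unfolding f_def by (rule sum_le_suminf[OF tail_summable]) auto
  moreover have "(\<Sum>j\<in>{0,1}. f j) = f 0 + f 1" by simp
  moreover have "f 0 = 1 / fact (Suc N)" by (simp add: f_def)
  moreover have "f 1 > 0" by (simp add: f_def)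
  ultimately have "suminf f > 1 / fact (Suc N)" by linarith
  thus ?thesis by (simp add: e_tail f_def)
qed

lemma fact_geom: "(fact (j + Suc N) :: real) \<ge> fact N * (real N + 1) ^ (Suc j)"
proof (induction j)
  case 0 then show ?case by (simp add: algebra_simps)
next
  case (Suc j)
  have "fact (Suc j + Suc N) = (real (j + Suc N) + 1) * (fact (j + Suc N) :: real)"
    by simp
  also have "\<dots> \<ge> (real N + 1) * (fact N * (real N + 1) ^ (Suc j))"
    using Suc by (intro mult_mono) auto
  finally show ?case by (simp add: algebra_simps)
qed

lemma e_tail_upper:
  assumes "N \<ge> 1"
  shows "exp 1 - eS N \<le> 1 / (fact N * real N)"
proof -
  define x where "x = 1 / (real N + 1)"
  have x: "0 < x" "x < 1" using assms by (auto simp: x_def field_simps)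
  have g: "(\<lambda>j. x^j) sums (1 / (1 - x))" using x by (intro geometric_sums) auto
  have g2: "(\<lambda>j. (x / fact N) * x^j) sums ((x / fact N) * (1 / (1 - x)))"
    by (rule sums_mult[OF g])
  have val: "(x / fact N) * (1 / (1 - x)) = 1 / (fact N * real N)"
  proof -
    have "fact N * real N + fact N * (real N * real N) > (0::real)"
      using assms by (intro add_pos_pos) auto
    thus ?thesis using assms by (simp add: x_def field_simps)
  qed
  have le: "1 / fact (j + Suc N) \<le> (x / fact N) * x^j" for j
  proof -
    have "(x / fact N) * x^j = 1 / (fact N * (real N + 1) ^ (Suc j))"
      by (simp add: x_def power_divide field_simps)
    also have "\<dots> \<ge> 1 / fact (j + Suc N)"
      using fact_geom[where j=j and N=N] by (intro divide_left_mono) auto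
    finally show ?thesis .
  qed
  have "(\<Sum>j. 1 / fact (j + Suc N) :: real) \<le> (\<Sum>j. (x / fact N) * x^j)"
    using le tail_summable g2 by (intro suminf_le) (auto simp: sums_iff)
  also have "\<dots> = 1 / (fact N * real N)" using g2 val by (simp add: sums_iff)
  finally show ?thesis by (simp add: e_tail)
qed

lemma eS_int: "fact N * eS N = real (\<Sum>j<Suc N. fact N div fact j :: nat)"
proof -
  have "fact N * eS N = (\<Sum>j<Suc N. (fact N :: real) / fact j)"
    by (simp add: eS_def sum_distrib_left del: sum.lessThan_Suc)
  also have "\<dots> = (\<Sum>j<Suc N. real (fact N div fact j :: nat))"
  proof (rule sum.cong[OF refl])
    fix j assume "j \<in> {..<Suc N}"
    hence "fact j dvd (fact N :: nat)" by (intro fact_dvd) auto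
    thus "(fact N :: real) / fact j = real (fact N div fact j :: nat)"
      by (simp add: real_of_nat_div of_nat_fact)
  qed
  finally show ?thesis by simp
qed

lemma e_irrational: "(exp 1 :: real) \<notin> \<rat>"
proof
  assume "(exp 1 :: real) \<in> \<rat>"
  then obtain a bi :: int where bi: "bi > 0" and abi: "(exp 1 :: real) = of_int a / of_int bi"
    by (elim Rats_cases') blast
  define b where "b = nat bi"
  have b: "b > 0" using bi by (simp add: b_def)
  have ab: "(exp 1 :: real) = of_int a / of_nat b" using abi bi by (simp add: b_def)
  define N where "N = Suc b"
  have N1: "N \<ge> 2" using b by (simp add: N_def)
  have "b dvd fact N" using b by (simp add: N_def dvd_fact)
  then obtain c where c: "fact N = b * c" by blast
  have cr: "(fact N :: real) = real b * real c"
  proof -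
    have "(fact N :: real) = real (fact N)" by simp
    also have "\<dots> = real (b * c)" by (simp only: c)
    finally show ?thesis by simp
  qed
  have "fact N * (exp 1 :: real) = of_int (a * int c)" using b by (simp add: ab cr field_simps)
  moreover obtain Z :: nat where Z: "fact N * eS N = real Z" using eS_int by blast
  ultimately have d: "fact N * (exp 1 - eS N) = of_int (a * int c - int Z)"
    by (simp add: algebra_simps)
  have "(1::real) / fact (Suc N) > 0" by simp
  hence "exp 1 - eS N > 0" using e_tail_lower[of N] by linarith
  hence lo: "fact N * (exp 1 - eS N) > 0" by simp
  have "fact N * (exp 1 - eS N) \<le> fact N * (1 / (fact N * real N))"
    using e_tail_upper[of N] N1 by (intro mult_left_mono) auto
  also have "\<dots> = 1 / real N" by simp
  also have "\<dots> < 1" using N1 by simp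
  finally have hi: "fact N * (exp 1 - eS N) < 1" .
  have "0 < real_of_int (a * int c - int Z)" using lo d by linarith
  hence z1: "0 < a * int c - int Z" by (simp only: of_int_0_less_iff)
  have "real_of_int (a * int c - int Z) < 1" using hi d by linarith
  hence z2: "a * int c - int Z < 1" by (simp only: of_int_less_1_iff)
  from z1 z2 show False by simp
qed

lemma e_gt: "exp 1 > (5/2 :: real)"
proof -
  have "eS 2 = 5/2" by (simp add: eS_def numeral_eq_Suc)
  moreover have "(1::real) / fact (Suc 2) > 0" by simp
  ultimately show ?thesis using e_tail_lower[of 2] by linarith
qed



lemma abs_aux: fixes e u s A B :: real
  shows "\<bar>e - u\<bar> \<le> A \<Longrightarrow> 0 \<le> e - s \<Longrightarrow> e - s \<le> B \<Longrightarrow> \<bar>u - s\<bar> \<le> A + B"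
  by (simp add: abs_le_iff)

lemma fact_pow_dvd: "(fact n :: nat) ^ k dvd fact (n * k)"
proof (induction k)
  case 0 then show ?case by simp
next
  case (Suc k)
  have "fact n ^ Suc k = fact n * fact n ^ k" by simp
  also have "\<dots> dvd (fact n :: nat) * fact (n * k)" by (rule mult_dvd_mono[OF dvd_refl Suc.IH])
  also have "\<dots> dvd (fact (n + n * k) :: nat)" by (rule fact_fact_dvd_fact)
  finally show ?case by (simp add: algebra_simps)
qed

lemma fact_ge_suc: "n \<ge> 3 \<Longrightarrow> Suc n \<le> (fact n :: nat)"
proof (induction n rule: dec_induct)
  case base then show ?case by (simp add: numeral_eq_Suc)
next
  case (step m)
  have "Suc (Suc m) \<le> Suc m * Suc m" using step(1) by (cases m) auto
  also have "\<dots> \<le> Suc m * fact m" using step by (intro mult_left_mono) auto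
  finally show ?case by simp
qed

theorem proposition4p1:
  fixes m n k :: nat and p q :: int
  assumes "quotient_of (cf_convergent (exp 1) m) = (p, q)"
    and "k > 0"
    and "q = (fact n) ^ k"
  shows "real n / real k < exp 1"
proof (rule ccontr)
  assume "\<not> real n / real k < exp 1"
  hence nk: "real n \<ge> exp 1 * real k" using assms(2) by (simp add: not_less le_divide_eq)
  have e25: "exp 1 > (5/2::real)" by (rule e_gt)
  have e1: "exp 1 \<ge> (1::real)" using e25 by simp
  have "exp 1 * real k \<ge> exp 1" using assms(2) e25 by simp
  hence "real n > 5/2" using nk e25 by linarith
  hence n3: "n \<ge> 3" by linarith
  define N where "N = n * k"
  have "3 * 1 \<le> n * k" using n3 assms(2) by (intro mult_le_mono) auto
  hence N3: "N \<ge> 3" by (simp add: N_def)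
  define Q where "Q = real_of_int q"
  have Qf: "Q = (fact n)^k" by (simp add: Q_def assms(3))
  have Q1: "Q \<ge> 1" unfolding Qf by (intro one_le_power) simp
  have approx: "\<bar>exp 1 - of_int p / Q\<bar> \<le> 1 / Q^2"
    using cf_approx[OF e1 e_irrational assms(1)] by (simp add: Q_def)
  obtain M :: nat where M: "fact N = (fact n)^k * M"
    using fact_pow_dvd[of n k] by (auto simp: N_def elim: dvdE)
  have fNQ: "(fact N :: real) = Q * real M"
  proof -
    have "(fact N :: real) = real (fact N)" by simp
    also have "\<dots> = real ((fact n)^k * M)" by (simp only: M)
    finally show ?thesis by (simp add: Qf)
  qed
  have fpos: "(fact N :: real) > 0" by simp
  have "M \<noteq> 0" using M by (cases "M = 0") auto
  hence Mpos: "real M > 0" by simp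
  obtain Z :: nat where Z: "fact N * eS N = real Z" using eS_int by blast
  have lo: "exp 1 - eS N > 1 / fact (Suc N)" by (rule e_tail_lower)
  have hi: "exp 1 - eS N \<le> 1 / (fact N * real N)" using N3 by (intro e_tail_upper) auto
  have mulrel: "fact N * (of_int p / Q - eS N) = of_int (p * int M - int Z)"
    using Z fNQ Q1 by (simp add: algebra_simps)
  have key: "Q^2 < fact (Suc N)"
  proof (cases "p * int M = int Z")
    case True
    hence "fact N * (of_int p / Q - eS N) = 0" using mulrel by simp
    hence "of_int p / Q = eS N" using fpos by simp
    hence "exp 1 - eS N \<le> 1 / Q^2" using approx lo by simp
    hence "1 / fact (Suc N) < 1 / Q^2" using lo by linarith
    thus ?thesis using Q1 by (simp add: divide_simps)
  next
    case False
    hence "\<bar>p * int M - int Z\<bar> \<ge> 1" by linarith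
    hence "\<bar>real_of_int (p * int M - int Z)\<bar> \<ge> 1" by (simp only: of_int_abs[symmetric] of_int_1_le_iff)
    moreover have "\<bar>fact N * (of_int p / Q - eS N)\<bar> = fact N * \<bar>of_int p / Q - eS N\<bar>"
      using fpos by (simp add: abs_mult)
    ultimately have "fact N * \<bar>of_int p / Q - eS N\<bar> \<ge> 1" using mulrel by simp
    moreover have "\<bar>of_int p / Q - eS N\<bar> \<le> 1 / Q^2 + 1 / (fact N * real N)"
    proof (rule abs_aux[OF approx _ hi])
      have "(1::real) / fact (Suc N) > 0" by simp
      thus "0 \<le> exp 1 - eS N" using lo by linarith
    qed
    ultimately have "1 \<le> fact N * (1 / Q^2 + 1 / (fact N * real N))"
      using fpos mult_left_mono[of "\<bar>of_int p / Q - eS N\<bar>" "1 / Q^2 + 1 / (fact N * real N)" "fact N"]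
      by linarith
    also have "\<dots> = fact N / Q^2 + 1 / real N" using fpos N3 by (simp add: field_simps)
    finally have s: "1 \<le> fact N / Q^2 + 1 / real N" .
    show ?thesis
    proof (rule ccontr)
      assume "\<not> Q^2 < fact (Suc N)"
      hence big: "Q^2 \<ge> fact N * (real N + 1)" by (simp add: algebra_simps)
      have "fact N / Q^2 \<le> fact N / (fact N * (real N + 1))"
      proof (rule divide_left_mono[OF big])
        show "0 \<le> (fact N :: real)" using fpos by simp
        have "fact N * (real N + 1) > (0::real)" using fpos by (intro mult_pos_pos) auto
        thus "0 < Q^2 * (fact N * (real N + 1))" using Q1 by (intro mult_pos_pos) auto
      qed
      also have "\<dots> = 1 / (real N + 1)" using fpos by simp
      finally have "1 \<le> 1 / (real N + 1) + 1 / real N" using s by linarith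
      moreover have "1 / (real N + 1) \<le> 1/4" "1 / real N \<le> 1/3" using N3 by (auto simp: field_simps)
      ultimately show False by linarith
    qed
  qed
  have "(fact (Suc N) :: real) \<le> Q^2"
  proof (cases "k = 1")
    case True
    have "Suc n \<le> (fact n :: nat)" using fact_ge_suc[OF n3] .
    hence "real (Suc n) \<le> fact n" by (metis of_nat_fact of_nat_le_iff)
    hence "real (Suc n) * fact n \<le> fact n * fact n" by (intro mult_right_mono) auto
    thus ?thesis using True by (simp add: N_def Qf power2_eq_square)
  next
    case False
    hence "k \<ge> 2" using assms(2) by simp
    from fact_ineq_k2[OF this nk e25]
    show ?thesis by (simp add: N_def Qf power_mult[symmetric] mult.commute)
  qed
  with key show False by simp
qed


end
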